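(* Let $R$ be a (not necessarily commutative) local ring with maximal ideal $\mathfrak{m}$, separated and complete for the $\mathfrak{m}$-adic topology, $\sigma:R\to R$ a ring automorphism with $\sigma(\mathfrak{m})=\mathfrak{m}$, and $\delta:R\to R$ a $\sigma$-derivation with $\delta(R)\subseteq\mathfrak{m}$ and $\delta(\mathfrak{m})\subseteq\mathfrak{m}^2$. Let $A=R[[X;\sigma,\delta]]$ and let $f\in A$ have finite reduced order $s=\mathrm{ord}^{red}(f)<\infty$. Then $A$ is the direct sum of left $R$-modules $$A=Af\oplus\bigoplus_{i=0}^{s-1}RX^i.$$
   Context: A $\sigma$-derivation is an additive map with $\delta(rs)=\delta(r)s+\sigma(r)\delta(s)$. $R[[X;\sigma,\delta]]$ is the skew power series ring whose elements are formal series $\sum_{n\ge0}r_nX^n$ ($r_n\in R$), with multiplication determined by $Xr=\sigma(r)X+\delta(r)$ (well defined by the hypotheses on $\sigma,\delta$ and completeness). For $f=\sum a_iX^i\in A$, $\mathrm{ord}^{red}(f)=\min\{i: a_i\in R^\times\}$. *)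

theory Defs
  imports Main
begin

definition two_sided_unit :: "'a::ring_1 \<Rightarrow> bool" where
  "two_sided_unit x \<longleftrightarrow> (\<exists>y. x * y = 1 \<and> y * x = 1)"

text \<open>The set of non-units; for a local ring this is the maximal ideal m.\<close>
definition maxideal :: "'a::ring_1 set" where
  "maxideal = {x. \<not> two_sided_unit x}"

definition local_ring :: "'a::ring_1 itself \<Rightarrow> bool" where
  "local_ring _ \<longleftrightarrow> (1::'a) \<noteq> 0 \<and>
     (\<forall>x\<in>(maxideal::'a set). \<forall>y\<in>maxideal. x + y \<in> maxideal) \<and>
     (\<forall>x\<in>(maxideal::'a set). \<forall>r. r * x \<in> maxideal \<and> x * r \<in> maxideal)"

inductive_set ideal_mult :: "'a::ring_1 set \<Rightarrow> 'a set \<Rightarrow> 'a set" for I J where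
  zero: "0 \<in> ideal_mult I J"
| prod: "x \<in> I \<Longrightarrow> y \<in> J \<Longrightarrow> x * y \<in> ideal_mult I J"
| add: "a \<in> ideal_mult I J \<Longrightarrow> b \<in> ideal_mult I J \<Longrightarrow> a + b \<in> ideal_mult I J"

primrec mpow :: "nat \<Rightarrow> 'a::ring_1 set" where
  "mpow 0 = UNIV"
| "mpow (Suc n) = ideal_mult maxideal (mpow n)"

definition madic_lim :: "(nat \<Rightarrow> 'a::ring_1) \<Rightarrow> 'a \<Rightarrow> bool" where
  "madic_lim s L \<longleftrightarrow> (\<forall>n. \<exists>N. \<forall>p\<ge>N. s p - L \<in> mpow n)"

definition madic_cauchy :: "(nat \<Rightarrow> 'a::ring_1) \<Rightarrow> bool" where
  "madic_cauchy s \<longleftrightarrow> (\<forall>n. \<exists>N. \<forall>p\<ge>N. \<forall>q\<ge>N. s p - s q \<in> mpow n)"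

definition madic_separated :: "'a::ring_1 itself \<Rightarrow> bool" where
  "madic_separated _ \<longleftrightarrow> (\<Inter>n. (mpow n :: 'a set)) = {0}"

definition madic_complete :: "'a::ring_1 itself \<Rightarrow> bool" where
  "madic_complete _ \<longleftrightarrow> (\<forall>s::nat \<Rightarrow> 'a. madic_cauchy s \<longrightarrow> (\<exists>L. madic_lim s L))"

definition msum :: "(nat \<Rightarrow> 'a::ring_1) \<Rightarrow> 'a" where
  "msum t = (THE L. madic_lim (\<lambda>N. \<Sum>i<N. t i) L)"

definition ring_automorphism :: "('a::ring_1 \<Rightarrow> 'a) \<Rightarrow> bool" where
  "ring_automorphism \<sigma> \<longleftrightarrow> bij \<sigma> \<and> \<sigma> 1 = 1 \<and>
     (\<forall>x y. \<sigma> (x + y) = \<sigma> x + \<sigma> y \<and> \<sigma> (x * y) = \<sigma> x * \<sigma> y)"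

definition sigma_derivation :: "('a::ring_1 \<Rightarrow> 'a) \<Rightarrow> ('a \<Rightarrow> 'a) \<Rightarrow> bool" where
  "sigma_derivation \<sigma> \<delta> \<longleftrightarrow>
     (\<forall>x y. \<delta> (x + y) = \<delta> x + \<delta> y \<and> \<delta> (x * y) = \<delta> x * y + \<sigma> x * \<delta> y)"

text \<open>Coefficients of X^i b = \<Sum>_k xb_coeff i b k X^k, computed from X r = \<sigma>(r) X + \<delta>(r).\<close>
primrec xb_coeff :: "('a::ring_1 \<Rightarrow> 'a) \<Rightarrow> ('a \<Rightarrow> 'a) \<Rightarrow> nat \<Rightarrow> 'a \<Rightarrow> nat \<Rightarrow> 'a" where
  "xb_coeff \<sigma> \<delta> 0 b k = (if k = 0 then b else 0)"
| "xb_coeff \<sigma> \<delta> (Suc i) b k =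
     (if k = 0 then 0 else \<sigma> (xb_coeff \<sigma> \<delta> i b (k - 1))) + \<delta> (xb_coeff \<sigma> \<delta> i b k)"

text \<open>Skew power series are coefficient sequences nat \<Rightarrow> 'a. Product in R[[X;\<sigma>,\<delta>]]:
  (\<Sum> g_i X^i)(\<Sum> f_j X^j) = \<Sum>_i \<Sum>_j g_i (X^i f_j) X^j, the i-sum taken m-adically.\<close>
definition skew_mult :: "('a::ring_1 \<Rightarrow> 'a) \<Rightarrow> ('a \<Rightarrow> 'a) \<Rightarrow> (nat \<Rightarrow> 'a) \<Rightarrow> (nat \<Rightarrow> 'a) \<Rightarrow> nat \<Rightarrow> 'a" where
  "skew_mult \<sigma> \<delta> g f n = msum (\<lambda>i. \<Sum>j\<le>n. g i * xb_coeff \<sigma> \<delta> i (f j) (n - j))"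

definition ord_red :: "(nat \<Rightarrow> 'a::ring_1) \<Rightarrow> nat" where
  "ord_red f = (LEAST i. two_sided_unit (f i))"

end

theory Submission
  imports Defs
begin


locale lr =
  assumes LR: "local_ring TYPE('a::ring_1)"
begin

lemma one_ne_zero': "(1::'a) \<noteq> 0" using LR unfolding local_ring_def by auto

lemma m_add: "x \<in> (maxideal::'a set) \<Longrightarrow> y \<in> maxideal \<Longrightarrow> x + y \<in> maxideal"
  using LR unfolding local_ring_def by auto
lemma m_lmult: "x \<in> (maxideal::'a set) \<Longrightarrow> r * x \<in> maxideal"
  using LR unfolding local_ring_def by auto
lemma m_rmult: "x \<in> (maxideal::'a set) \<Longrightarrow> x * r \<in> maxideal"
  using LR unfolding local_ring_def by auto
lemma m_zero: "(0::'a) \<in> maxideal"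
  using one_ne_zero' unfolding maxideal_def two_sided_unit_def by auto
lemma m_neg: "x \<in> (maxideal::'a set) \<Longrightarrow> - x \<in> maxideal"
proof -
  assume x: "x \<in> maxideal"
  have "\<not> two_sided_unit (- x)"
  proof
    assume "two_sided_unit (- x)"
    then obtain y where "- x * y = 1" "y * - x = 1" unfolding two_sided_unit_def by blast
    then have "x * (- y) = 1" "(- y) * x = 1" by simp_all
    then have "two_sided_unit x" unfolding two_sided_unit_def by blast
    with x show False unfolding maxideal_def by simp
  qed
  then show ?thesis unfolding maxideal_def by simp
qed

lemma im_neg:
  assumes I: "\<And>x. x \<in> I \<Longrightarrow> - x \<in> I"
  shows "z \<in> ideal_mult I J \<Longrightarrow> - z \<in> ideal_mult I J"
proof (induction rule: ideal_mult.induct)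
  case zero then show ?case by (simp add: ideal_mult.zero)
next
  case (prod x y) then show ?case using I[of x] ideal_mult.prod[of "-x" I y J] by simp
next
  case (add a b) then show ?case using ideal_mult.add[of "-b" I J "-a"] by (simp add: add.commute)
qed

lemma im_lmult:
  assumes I: "\<And>x r. x \<in> I \<Longrightarrow> r * x \<in> I"
  shows "z \<in> ideal_mult I J \<Longrightarrow> r * z \<in> ideal_mult I J"
proof (induction rule: ideal_mult.induct)
  case zero then show ?case by (simp add: ideal_mult.zero)
next
  case (prod x y) then show ?case using I[of x r] ideal_mult.prod[of "r*x" I y J] by (simp add: mult.assoc)
next
  case (add a b) then show ?case using ideal_mult.add[of "r*a" I J "r*b"] by (simp add: distrib_left)
qed

lemma im_rmult:
  assumes J: "\<And>x r. x \<in> J \<Longrightarrow> x * r \<in> J"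
  shows "z \<in> ideal_mult I J \<Longrightarrow> z * r \<in> ideal_mult I J"
proof (induction rule: ideal_mult.induct)
  case zero then show ?case by (simp add: ideal_mult.zero)
next
  case (prod x y) then show ?case using J[of y r] ideal_mult.prod[of x I "y*r" J] by (simp add: mult.assoc)
next
  case (add a b) then show ?case using ideal_mult.add[of "a*r" I J "b*r"] by (simp add: distrib_right)
qed

lemma mpow_props: "(0::'a) \<in> mpow n \<and> (\<forall>x\<in>mpow n. - x \<in> (mpow n::'a set)) \<and>
   (\<forall>x\<in>mpow n. \<forall>r. r * x \<in> (mpow n::'a set) \<and> x * r \<in> mpow n)"
proof (induction n)
  case 0 then show ?case by simp
next
  case (Suc n)
  have A: "\<And>x r. x \<in> mpow n \<Longrightarrow> x * r \<in> (mpow n::'a set)" using Suc by blast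
  have 1: "(0::'a) \<in> mpow (Suc n)" by (simp add: ideal_mult.zero)
  have 2: "- x \<in> mpow (Suc n)" if "x \<in> mpow (Suc n)" for x :: 'a
    proof -
    have "x \<in> ideal_mult maxideal (mpow n)" using that by simp
    from im_neg[OF m_neg this] show ?thesis by simp
  qed
  have 3: "r * x \<in> mpow (Suc n)" if "x \<in> mpow (Suc n)" for x r :: 'a
    using that im_lmult[of maxideal x "mpow n" r, OF m_lmult] by simp
  have 4: "x * r \<in> mpow (Suc n)" if "x \<in> mpow (Suc n)" for x r :: 'a
    using that im_rmult[of "mpow n" x maxideal r, OF A] by simp
  show ?case using 1 2 3 4 by blast
qed

lemma mpow_zero[simp]: "(0::'a) \<in> mpow n" using mpow_props by blast
lemma mpow_neg: "x \<in> (mpow n::'a set) \<Longrightarrow> - x \<in> mpow n" using mpow_props by blast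
lemma mpow_lmult: "x \<in> (mpow n::'a set) \<Longrightarrow> r * x \<in> mpow n" using mpow_props by blast
lemma mpow_rmult: "x \<in> (mpow n::'a set) \<Longrightarrow> x * r \<in> mpow n" using mpow_props by blast
lemma mpow_add: "x \<in> (mpow n::'a set) \<Longrightarrow> y \<in> mpow n \<Longrightarrow> x + y \<in> mpow n"
  by (cases n) (auto intro: ideal_mult.add)
lemma mpow_diff: "x \<in> (mpow n::'a set) \<Longrightarrow> y \<in> mpow n \<Longrightarrow> x - y \<in> mpow n"
  using mpow_add[of x n "-y"] mpow_neg[of y n] by simp
lemma mpow_sum: "(\<And>i. i \<in> A \<Longrightarrow> t i \<in> (mpow n::'a set)) \<Longrightarrow> sum t A \<in> mpow n"
  by (induction A rule: infinite_finite_induct) (auto intro: mpow_add)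

lemma mpow_Suc_sub: "mpow (Suc n) \<subseteq> (mpow n::'a set)"
proof
  fix z :: 'a assume "z \<in> mpow (Suc n)"
  then have "z \<in> ideal_mult maxideal (mpow n)" by simp
  then show "z \<in> mpow n"
    by (induction rule: ideal_mult.induct) (auto intro: mpow_lmult mpow_add)
qed

lemma mpow_anti: "a \<le> b \<Longrightarrow> mpow b \<subseteq> (mpow a::'a set)"
  by (induction b rule: dec_induct) (use mpow_Suc_sub in auto)

lemma mpow_one: "mpow 1 = (maxideal::'a set)"
proof
  show "mpow 1 \<subseteq> (maxideal::'a set)"
  proof
    fix z :: 'a assume "z \<in> mpow 1"
    then have "z \<in> ideal_mult maxideal (mpow 0)" by simp
    then show "z \<in> maxideal"
      by (induction rule: ideal_mult.induct) (auto intro: m_zero m_rmult m_add)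
  qed
  show "maxideal \<subseteq> (mpow 1::'a set)"
    using ideal_mult.prod[of _ maxideal 1 UNIV] by auto
qed

lemma mpow_mult: "x \<in> (mpow a::'a set) \<Longrightarrow> y \<in> mpow b \<Longrightarrow> x * y \<in> mpow (a + b)"
proof (induction a arbitrary: x)
  case 0 then show ?case by (simp add: mpow_lmult)
next
  case (Suc a)
  from Suc.prems(1) have "x \<in> ideal_mult maxideal (mpow a)" by simp
  then show ?case
  proof (induction rule: ideal_mult.induct)
    case zero then show ?case by (simp add: ideal_mult.zero)
  next
    case (prod p q)
    then have "q * y \<in> mpow (a + b)" using Suc.IH Suc.prems(2) by blast
    then show ?case using prod ideal_mult.prod[of p maxideal "q*y" "mpow (a+b)"] by (simp add: mult.assoc)
  next
    case (add u w) then show ?case using mpow_add[of "u*y" "Suc a + b" "w*y"] by (simp add: distrib_right)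
  qed
qed

lemma unit_cancel: "two_sided_unit u \<Longrightarrow> x * u \<in> (mpow n::'a set) \<Longrightarrow> x \<in> mpow n"
proof -
  assume u: "two_sided_unit u" and xu: "x * u \<in> mpow n"
  obtain w where w: "u * w = 1" using u unfolding two_sided_unit_def by blast
  have "x * u * w \<in> mpow n" using xu by (rule mpow_rmult)
  then show ?thesis using w by (simp add: mult.assoc)
qed

lemma not_unit_m: "\<not> two_sided_unit x \<Longrightarrow> x \<in> maxideal" unfolding maxideal_def by simp

lemma sep_zero: "madic_separated TYPE('a) \<Longrightarrow> (\<And>n. x \<in> (mpow n::'a set)) \<Longrightarrow> x = 0"
  unfolding madic_separated_def by blast

end


declare ideal_mult.zero[simp]
declare mpow.simps(2)[simp del]

locale ws = lr +
  fixes \<sigma> \<delta> :: "'a::ring_1 \<Rightarrow> 'a"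
  assumes SEP: "madic_separated TYPE('a)"
    and COMP: "madic_complete TYPE('a)"
    and AUT: "ring_automorphism \<sigma>"
    and SM: "\<sigma> ` maxideal = maxideal"
    and DER: "sigma_derivation \<sigma> \<delta>"
    and DR: "range \<delta> \<subseteq> maxideal"
    and DM: "\<delta> ` maxideal \<subseteq> mpow 2"
begin

lemma sig_add: "\<sigma> (x + y) = \<sigma> x + \<sigma> y" using AUT unfolding ring_automorphism_def by blast
lemma sig_mult: "\<sigma> (x * y) = \<sigma> x * \<sigma> y" using AUT unfolding ring_automorphism_def by blast
lemma sig_one: "\<sigma> 1 = 1" using AUT unfolding ring_automorphism_def by blast
lemma sig_zero: "\<sigma> 0 = 0" using sig_add[of 0 0] by simp
lemma del_add: "\<delta> (x + y) = \<delta> x + \<delta> y" using DER unfolding sigma_derivation_def by blast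
lemma del_mult: "\<delta> (x * y) = \<delta> x * y + \<sigma> x * \<delta> y" using DER unfolding sigma_derivation_def by blast
lemma del_zero: "\<delta> 0 = 0" using del_add[of 0 0] by simp
lemma sig_m: "x \<in> maxideal \<Longrightarrow> \<sigma> x \<in> maxideal" using SM by blast

lemma sp_mult: "(\<sigma> ^^ i) (x * y) = (\<sigma> ^^ i) x * (\<sigma> ^^ i) y"
  by (induction i) (auto simp: sig_mult)
lemma sp_one: "(\<sigma> ^^ i) 1 = 1"
  by (induction i) (auto simp: sig_one)
lemma sp_m: "x \<in> maxideal \<Longrightarrow> (\<sigma> ^^ i) x \<in> maxideal"
  by (induction i) (auto simp: sig_m)
lemma sp_unit: "two_sided_unit x \<Longrightarrow> two_sided_unit ((\<sigma> ^^ i) x)"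
  unfolding two_sided_unit_def by (metis sp_mult sp_one)

lemma sig_mpow: "x \<in> mpow n \<Longrightarrow> \<sigma> x \<in> mpow n"
proof (induction n arbitrary: x)
  case 0 then show ?case by simp
next
  case (Suc n)
  from Suc.prems have "x \<in> ideal_mult maxideal (mpow n)" by (simp add: mpow.simps)
  then show ?case
  proof (induction rule: ideal_mult.induct)
    case zero then show ?case by (simp add: sig_zero ideal_mult.zero)
  next
    case (prod p q)
    then show ?case using ideal_mult.prod[OF sig_m[OF prod(1)] Suc.IH[OF prod(2)]] by (simp add: sig_mult mpow.simps)
  next
    case (add a b) then show ?case using ideal_mult.add[of "\<sigma> a" maxideal "mpow n" "\<sigma> b"] by (simp add: sig_add mpow.simps)
  qed
qed

lemma del_mpow: "x \<in> mpow k \<Longrightarrow> \<delta> x \<in> mpow (Suc k)"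
proof (induction k arbitrary: x)
  case 0 then show ?case using DR mpow_one by auto
next
  case (Suc k)
  from Suc.prems have "x \<in> ideal_mult maxideal (mpow k)" by (simp add: mpow.simps)
  then show ?case
  proof (induction rule: ideal_mult.induct)
    case zero then show ?case by (simp add: del_zero)
  next
    case (prod p q)
    have 1: "\<delta> p \<in> mpow 2" using DM prod(1) by blast
    have "\<delta> p * q \<in> mpow (2 + k)" using mpow_mult[OF 1 prod(2)] .
    then have a: "\<delta> p * q \<in> mpow (Suc (Suc k))" by simp
    have 2: "\<sigma> p \<in> mpow 1" using sig_m[OF prod(1)] mpow_one by simp
    have "\<sigma> p * \<delta> q \<in> mpow (1 + Suc k)" using mpow_mult[OF 2 Suc.IH[OF prod(2)]] .
    then have b: "\<sigma> p * \<delta> q \<in> mpow (Suc (Suc k))" by simp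
    show ?case using mpow_add[OF a b] by (simp add: del_mult)
  next
    case (add a b) then show ?case by (simp add: del_add mpow_add)
  qed
qed

lemma xb_gt: "i < k \<Longrightarrow> xb_coeff \<sigma> \<delta> i b k = 0"
  by (induction i arbitrary: k) (auto simp: sig_zero del_zero)

lemma xb_diag: "xb_coeff \<sigma> \<delta> i b i = (\<sigma> ^^ i) b"
  by (induction i) (auto simp: xb_gt del_zero)

lemma xb_mpow: "xb_coeff \<sigma> \<delta> i b k \<in> mpow (i - k)"
proof (induction i arbitrary: k)
  case 0 then show ?case by simp
next
  case (Suc i)
  have a: "(if k = 0 then 0 else \<sigma> (xb_coeff \<sigma> \<delta> i b (k - 1))) \<in> mpow (Suc i - k)"
  proof (cases "k = 0")
    case True then show ?thesis by simp
  next
    case False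
    have e: "Suc i - k = i - (k - 1)" using False by simp
    have "xb_coeff \<sigma> \<delta> i b (k - 1) \<in> mpow (Suc i - k)" unfolding e by (rule Suc.IH)
    then show ?thesis using False sig_mpow by simp
  qed
  have "\<delta> (xb_coeff \<sigma> \<delta> i b k) \<in> mpow (Suc (i - k))" using del_mpow Suc.IH by blast
  moreover have "Suc i - k \<le> Suc (i - k)" by simp
  ultimately have b: "\<delta> (xb_coeff \<sigma> \<delta> i b k) \<in> mpow (Suc i - k)" using mpow_anti by blast
  show ?case using mpow_add[OF a b] by simp
qed

end


definition tends0 :: "(nat \<Rightarrow> 'a::ring_1) \<Rightarrow> bool" where
  "tends0 t \<longleftrightarrow> (\<forall>n. \<exists>N. \<forall>i\<ge>N. t i \<in> mpow n)"

context ws begin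

lemma lim_unique: "madic_lim (s::nat \<Rightarrow> 'a) L \<Longrightarrow> madic_lim s L' \<Longrightarrow> L = L'"
proof -
  assume a: "madic_lim s L" and b: "madic_lim s L'"
  have "L' - L \<in> mpow n" for n
  proof -
    obtain N1 where 1: "\<forall>p\<ge>N1. s p - L \<in> mpow n" using a unfolding madic_lim_def by blast
    obtain N2 where 2: "\<forall>p\<ge>N2. s p - L' \<in> mpow n" using b unfolding madic_lim_def by blast
    have a: "s (max N1 N2) - L \<in> mpow n" using 1 by simp
    have b: "s (max N1 N2) - L' \<in> mpow n" using 2 by simp
    have "(s (max N1 N2) - L) - (s (max N1 N2) - L') \<in> mpow n" using mpow_diff[OF a b] .
    then show ?thesis by simp
  qed
  then have "L' - L = 0" using sep_zero[OF SEP] by blast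
  then show ?thesis by simp
qed

lemma psum_diff: "q \<le> (p::nat) \<Longrightarrow> (\<forall>i\<ge>q. (t::nat\<Rightarrow>'a) i \<in> mpow n) \<Longrightarrow> (\<Sum>i<p. t i) - (\<Sum>i<q. t i) \<in> (mpow n :: 'a set)"
proof (induction p rule: dec_induct)
  case base then show ?case by simp
next
  case (step m)
  have e: "(\<Sum>i<Suc m. t i) - (\<Sum>i<q. t i) = ((\<Sum>i<m. t i) - (\<Sum>i<q. t i)) + t m" by simp
  have "t m \<in> mpow n" using step by simp
  from mpow_add[OF step.IH[OF step.prems] this] show ?case unfolding e .
qed

lemma msum_lim: "tends0 t \<Longrightarrow> madic_lim (\<lambda>N. \<Sum>i<N. t i) (msum (t::nat \<Rightarrow> 'a))"
proof -
  assume t: "tends0 t"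
  have "madic_cauchy (\<lambda>N. \<Sum>i<N. t i)"
    unfolding madic_cauchy_def
  proof
    fix n
    obtain N where N: "\<forall>i\<ge>N. t i \<in> mpow n" using t unfolding tends0_def by blast
    have "(\<Sum>i<p. t i) - (\<Sum>i<q. t i) \<in> mpow n" if "p \<ge> N" "q \<ge> N" for p q
    proof -
      have Nq: "\<forall>i\<ge>q. t i \<in> mpow n" "\<forall>i\<ge>p. t i \<in> mpow n" using N that by auto
      show ?thesis
    proof (cases "q \<le> p")
      case True then show ?thesis using psum_diff Nq by simp
    next
      case False
      then have "(\<Sum>i<q. t i) - (\<Sum>i<p. t i) \<in> mpow n" using psum_diff Nq by simp
      from mpow_neg[OF this] show ?thesis by simp
    qed
    qed
    then show "\<exists>N. \<forall>p\<ge>N. \<forall>q\<ge>N. (\<Sum>i<p. t i) - (\<Sum>i<q. t i) \<in> mpow n" by blast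
  qed
  then obtain L where L: "madic_lim (\<lambda>N. \<Sum>i<N. t i) L" using COMP unfolding madic_complete_def by blast
  show ?thesis unfolding msum_def
    by (rule theI[of _ L]) (use L lim_unique in blast)+
qed

lemma msum_tail: "tends0 t \<Longrightarrow> (\<forall>i\<ge>N. t i \<in> mpow V) \<Longrightarrow> msum t - (\<Sum>i<N. t i) \<in> (mpow V::'a set)"
proof -
  assume t: "tends0 t" and V: "\<forall>i\<ge>N. t i \<in> mpow V"
  obtain M where M: "\<forall>p\<ge>M. (\<Sum>i<p. t i) - msum t \<in> mpow V"
    using msum_lim[OF t] unfolding madic_lim_def by blast
  let ?p = "max M N"
  have 1: "(\<Sum>i<?p. t i) - msum t \<in> mpow V" using M by simp
  have 2: "(\<Sum>i<?p. t i) - (\<Sum>i<N. t i) \<in> mpow V" by (rule psum_diff) (use V in auto)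
  have "((\<Sum>i<?p. t i) - (\<Sum>i<N. t i)) - ((\<Sum>i<?p. t i) - msum t) \<in> mpow V" using mpow_diff[OF 2 1] .
  then show ?thesis by (simp add: algebra_simps)
qed

lemma tends0_add: "tends0 t \<Longrightarrow> tends0 u \<Longrightarrow> tends0 (\<lambda>i. t i + (u i::'a))"
  unfolding tends0_def by (metis mpow_add max.bounded_iff nle_le)

lemma msum_add: "tends0 t \<Longrightarrow> tends0 u \<Longrightarrow> msum (\<lambda>i. t i + u i) = msum t + msum (u::nat \<Rightarrow> 'a)"
proof -
  assume t: "tends0 t" and u: "tends0 u"
  have "madic_lim (\<lambda>N. \<Sum>i<N. t i + u i) (msum t + msum u)"
    unfolding madic_lim_def
  proof
    fix n
    obtain N1 where 1: "\<forall>p\<ge>N1. (\<Sum>i<p. t i) - msum t \<in> mpow n" using msum_lim[OF t] unfolding madic_lim_def by blast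
    obtain N2 where 2: "\<forall>p\<ge>N2. (\<Sum>i<p. u i) - msum u \<in> mpow n" using msum_lim[OF u] unfolding madic_lim_def by blast
    have "(\<Sum>i<p. t i + u i) - (msum t + msum u) \<in> mpow n" if "p \<ge> max N1 N2" for p
    proof -
      have "((\<Sum>i<p. t i) - msum t) + ((\<Sum>i<p. u i) - msum u) \<in> mpow n" using 1 2 that mpow_add by simp
      then show ?thesis by (simp add: sum.distrib algebra_simps)
    qed
    then show "\<exists>N. \<forall>p\<ge>N. (\<Sum>i<p. t i + u i) - (msum t + msum u) \<in> mpow n" by blast
  qed
  then show ?thesis using msum_lim[OF tends0_add[OF t u]] lim_unique by blast
qed

definition skt :: "(nat \<Rightarrow> 'a) \<Rightarrow> (nat \<Rightarrow> 'a) \<Rightarrow> nat \<Rightarrow> nat \<Rightarrow> 'a" where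
  "skt g f n i = (\<Sum>j\<le>n. g i * xb_coeff \<sigma> \<delta> i (f j) (n - j))"

lemma skew_eq: "skew_mult \<sigma> \<delta> g f n = msum (skt g f n)"
  unfolding skew_mult_def skt_def ..

lemma skt_tends0: "tends0 (skt g f n)"
  unfolding tends0_def
proof
  fix N
  have "skt g f n i \<in> mpow N" if "i \<ge> N + n" for i
    unfolding skt_def
  proof (rule mpow_sum)
    fix j assume "j \<in> {..n}"
    have "xb_coeff \<sigma> \<delta> i (f j) (n - j) \<in> mpow (i - (n - j))" by (rule xb_mpow)
    moreover have "N \<le> i - (n - j)" using that by simp
    ultimately have "xb_coeff \<sigma> \<delta> i (f j) (n - j) \<in> mpow N" using mpow_anti by blast
    then show "g i * xb_coeff \<sigma> \<delta> i (f j) (n - j) \<in> mpow N" by (rule mpow_lmult)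
  qed
  then show "\<exists>M. \<forall>i\<ge>M. skt g f n i \<in> mpow N" by blast
qed

lemma skew_add: "skew_mult \<sigma> \<delta> (\<lambda>i. a i + b i) f n = skew_mult \<sigma> \<delta> a f n + skew_mult \<sigma> \<delta> b f n"
proof -
  have "skt (\<lambda>i. a i + b i) f n = (\<lambda>i. skt a f n i + skt b f n i)"
    unfolding skt_def by (simp add: distrib_right sum.distrib)
  then show ?thesis unfolding skew_eq using msum_add[OF skt_tends0 skt_tends0] by simp
qed

lemma skew_mpow: "(\<And>i. g i \<in> mpow V) \<Longrightarrow> skew_mult \<sigma> \<delta> g f n \<in> mpow V"
  unfolding skew_eq
proof -
  assume g: "\<And>i. g i \<in> mpow V"
  have "\<forall>i\<ge>0. skt g f n i \<in> mpow V" unfolding skt_def using g by (auto intro!: mpow_sum mpow_rmult)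
  from msum_tail[OF skt_tends0 this] show "msum (skt g f n) \<in> mpow V" by simp
qed

end


function gw :: "(nat \<Rightarrow> 'a::ring_1) \<Rightarrow> (nat \<Rightarrow> nat \<Rightarrow> 'a) \<Rightarrow> (nat \<Rightarrow> 'a) \<Rightarrow> nat \<Rightarrow> 'a" where
  "gw E C D i = (E i - (\<Sum>l<i. gw E C D l * C l i)) * D i"
  by pat_completeness auto
termination by (relation "measure (\<lambda>(E, C, D, i). i)") auto

declare gw.simps[simp del]

context ws begin

lemma T_small: "i \<noteq> k \<Longrightarrow> x \<in> mpow v \<Longrightarrow> x * xb_coeff \<sigma> \<delta> i b k \<in> mpow (Suc v)"
proof (cases "i < k")
  case True then show ?thesis by (simp add: xb_gt)
next
  case False
  assume "i \<noteq> k" "x \<in> mpow v"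
  then have "1 \<le> i - k" using False by simp
  then have "xb_coeff \<sigma> \<delta> i b k \<in> mpow 1" using xb_mpow mpow_anti by blast
  from mpow_mult[OF \<open>x \<in> mpow v\<close> this] show ?thesis by simp
qed

lemma skew_cong:
  assumes g: "\<And>i. g i \<in> mpow v"
  shows "skew_mult \<sigma> \<delta> g f n - (\<Sum>j\<le>n. g (n - j) * (\<sigma> ^^ (n - j)) (f j)) \<in> mpow (Suc v)"
proof -
  have tail: "\<forall>i\<ge>Suc n. skt g f n i \<in> mpow (Suc v)"
    unfolding skt_def using g by (auto intro!: mpow_sum T_small)
  have 1: "skew_mult \<sigma> \<delta> g f n - (\<Sum>i<Suc n. skt g f n i) \<in> mpow (Suc v)"
    unfolding skew_eq by (rule msum_tail[OF skt_tends0 tail])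
  have "(\<Sum>i<Suc n. skt g f n i) = (\<Sum>j\<le>n. \<Sum>i<Suc n. g i * xb_coeff \<sigma> \<delta> i (f j) (n - j))"
    unfolding skt_def by (rule sum.swap)
  then have e: "(\<Sum>i<Suc n. skt g f n i) - (\<Sum>j\<le>n. g (n - j) * (\<sigma> ^^ (n - j)) (f j)) =
     (\<Sum>j\<le>n. (\<Sum>i<Suc n. g i * xb_coeff \<sigma> \<delta> i (f j) (n - j)) - g (n - j) * (\<sigma> ^^ (n - j)) (f j))"
    by (simp add: sum_subtractf)
  have 2: "(\<Sum>i<Suc n. skt g f n i) - (\<Sum>j\<le>n. g (n - j) * (\<sigma> ^^ (n - j)) (f j)) \<in> mpow (Suc v)"
    unfolding e
  proof (rule mpow_sum)
    fix j assume j: "j \<in> {..n}"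
    have mem: "n - j \<in> {..<Suc n}" by simp
    have "(\<Sum>i<Suc n. g i * xb_coeff \<sigma> \<delta> i (f j) (n - j)) =
      g (n - j) * xb_coeff \<sigma> \<delta> (n - j) (f j) (n - j) + (\<Sum>i\<in>{..<Suc n} - {n - j}. g i * xb_coeff \<sigma> \<delta> i (f j) (n - j))"
      by (rule sum.remove[OF _ mem]) simp
    then have e2: "(\<Sum>i<Suc n. g i * xb_coeff \<sigma> \<delta> i (f j) (n - j)) - g (n - j) * (\<sigma> ^^ (n - j)) (f j)
       = (\<Sum>i\<in>{..<Suc n} - {n - j}. g i * xb_coeff \<sigma> \<delta> i (f j) (n - j))"
      by (simp add: xb_diag)
    show "(\<Sum>i<Suc n. g i * xb_coeff \<sigma> \<delta> i (f j) (n - j)) - g (n - j) * (\<sigma> ^^ (n - j)) (f j) \<in> mpow (Suc v)"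
      unfolding e2 using g by (auto intro!: mpow_sum T_small)
  qed
  have "(skew_mult \<sigma> \<delta> g f n - (\<Sum>i<Suc n. skt g f n i)) +
        ((\<Sum>i<Suc n. skt g f n i) - (\<Sum>j\<le>n. g (n - j) * (\<sigma> ^^ (n - j)) (f j))) \<in> mpow (Suc v)"
    by (rule mpow_add[OF 1 2])
  then show ?thesis by simp
qed

end

locale ws2 = ws +
  fixes f :: "nat \<Rightarrow> 'a"
  assumes FU: "\<exists>i. two_sided_unit (f i)"
begin

abbreviation "s \<equiv> ord_red f"

lemma fs_unit: "two_sided_unit (f s)"
  unfolding ord_red_def using FU by (rule LeastI_ex)

lemma fj_m: "j < s \<Longrightarrow> f j \<in> maxideal"
  unfolding ord_red_def by (rule not_unit_m) (rule not_less_Least)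

definition u :: "nat \<Rightarrow> 'a" where "u i = (\<sigma> ^^ i) (f s)"
definition w :: "nat \<Rightarrow> 'a" where "w i = (SOME y. u i * y = 1 \<and> y * u i = 1)"
definition C :: "nat \<Rightarrow> nat \<Rightarrow> 'a" where "C l i = (\<sigma> ^^ l) (f (i + s - l))"

lemma uw: "u i * w i = 1 \<and> w i * u i = 1"
proof -
  have "two_sided_unit (u i)" unfolding u_def by (rule sp_unit[OF fs_unit])
  then show ?thesis unfolding w_def two_sided_unit_def by (rule someI_ex)
qed

lemma skew_congB:
  assumes g: "\<And>i. g i \<in> mpow v"
  shows "skew_mult \<sigma> \<delta> g f n - (\<Sum>j\<in>{s..n}. g (n - j) * (\<sigma> ^^ (n - j)) (f j)) \<in> mpow (Suc v)"
proof -
  let ?F = "\<lambda>j. g (n - j) * (\<sigma> ^^ (n - j)) (f j)"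
  have e: "(\<Sum>j\<le>n. ?F j) = (\<Sum>j\<in>{..n} - {s..n}. ?F j) + (\<Sum>j\<in>{s..n}. ?F j)"
    by (rule sum.subset_diff) auto
  have 2: "(\<Sum>j\<in>{..n} - {s..n}. ?F j) \<in> mpow (Suc v)"
  proof (rule mpow_sum)
    fix j assume "j \<in> {..n} - {s..n}"
    then have "j < s" by auto
    then have "(\<sigma> ^^ (n - j)) (f j) \<in> mpow 1" using sp_m fj_m mpow_one by simp
    from mpow_mult[OF g this] show "?F j \<in> mpow (Suc v)" by simp
  qed
  have "(skew_mult \<sigma> \<delta> g f n - (\<Sum>j\<le>n. ?F j)) + (\<Sum>j\<in>{..n} - {s..n}. ?F j) \<in> mpow (Suc v)"
    by (rule mpow_add[OF skew_cong[OF g] 2])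
  then show ?thesis unfolding e by (simp add: algebra_simps)
qed

lemma reidx: "(\<Sum>j\<in>{s..i+s}. g (i + s - j) * (\<sigma> ^^ (i + s - j)) (f j)) = g i * u i + (\<Sum>l<i. g l * C l i)"
proof -
  have "(\<Sum>j\<in>{s..i+s}. g (i + s - j) * (\<sigma> ^^ (i + s - j)) (f j)) = (\<Sum>l\<le>i. g l * C l i)"
    unfolding C_def
    by (rule sum.reindex_bij_witness[where i="\<lambda>j. i + s - j" and j="\<lambda>l. i + s - l"]) auto
  also have "\<dots> = (\<Sum>l<i. g l * C l i) + g i * C i i"
    by (simp add: lessThan_Suc_atMost[symmetric])
  also have "C i i = u i" unfolding C_def u_def by simp
  finally show ?thesis by (simp add: add.commute)
qed

end


context ws2 begin

lemma step_ex: "\<exists>g' r'. \<forall>v. (\<forall>n. e n \<in> mpow v) \<longrightarrow> (\<forall>i. g' i \<in> mpow v) \<and> (\<forall>n. r' n \<in> mpow v) \<and>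
   (\<forall>n. e n - skew_mult \<sigma> \<delta> g' f n - (if n < s then r' n else 0) \<in> mpow (Suc v))"
proof -
  let ?g = "gw (\<lambda>i. e (i + s)) C w"
  have "(\<forall>n. e n \<in> mpow v) \<longrightarrow> (\<forall>i. ?g i \<in> mpow v) \<and> (\<forall>n. e n \<in> mpow v) \<and>
   (\<forall>n. e n - skew_mult \<sigma> \<delta> ?g f n - (if n < s then e n else 0) \<in> mpow (Suc v))" for v
  proof (intro impI conjI)
  assume ev: "\<forall>n. e n \<in> mpow v"
  show G: "\<forall>i. ?g i \<in> mpow v"
  proof
    fix i show "?g i \<in> mpow v"
    proof (induction i rule: less_induct)
      case (less i)
      have "(\<Sum>l<i. ?g l * C l i) \<in> mpow v" using less by (auto intro!: mpow_sum mpow_rmult)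
      then have "(e (i + s) - (\<Sum>l<i. ?g l * C l i)) * w i \<in> mpow v"
        using ev by (intro mpow_rmult mpow_diff) auto
      then show ?case by (subst gw.simps)
    qed
  qed
  show "\<forall>n. e n \<in> mpow v" by (rule ev)
  show "\<forall>n. e n - skew_mult \<sigma> \<delta> ?g f n - (if n < s then e n else 0) \<in> mpow (Suc v)"
  proof
    fix n
    have B: "skew_mult \<sigma> \<delta> ?g f n - (\<Sum>j\<in>{s..n}. ?g (n - j) * (\<sigma> ^^ (n - j)) (f j)) \<in> mpow (Suc v)"
      using G by (intro skew_congB) auto
    show "e n - skew_mult \<sigma> \<delta> ?g f n - (if n < s then e n else 0) \<in> mpow (Suc v)"
    proof (cases "n < s")
      case True
      then have "skew_mult \<sigma> \<delta> ?g f n \<in> mpow (Suc v)" using B by simp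
      from mpow_neg[OF this] show ?thesis using True by simp
    next
      case False
      then obtain i where n: "n = i + s" by (metis add.commute le_add_diff_inverse not_less)
      let ?S = "\<Sum>l<i. ?g l * C l i"
      have gi: "?g i = (e (i + s) - ?S) * w i" by (subst gw.simps) simp
      have "?g i * u i + ?S = e n"
        unfolding gi n using uw[of i] by (simp add: mult.assoc)
      then have "skew_mult \<sigma> \<delta> ?g f n - e n \<in> mpow (Suc v)"
        using B reidx[of ?g i] n by simp
      from mpow_neg[OF this] show ?thesis using False by simp
    qed
  qed
  qed
  then show ?thesis by blast
qed

lemma uniq:
  assumes eq: "\<And>n. skew_mult \<sigma> \<delta> g f n + (if n < s then r n else 0) = 0"
  shows "(\<forall>i. g i \<in> mpow v) \<and> (\<forall>n<s. r n \<in> mpow v)"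
proof (induction v)
  case 0 then show ?case by simp
next
  case (Suc v)
  have gv: "\<And>i. g i \<in> mpow v" using Suc by blast
  have B: "\<And>n. skew_mult \<sigma> \<delta> g f n - (\<Sum>j\<in>{s..n}. g (n - j) * (\<sigma> ^^ (n - j)) (f j)) \<in> mpow (Suc v)"
    using gv by (rule skew_congB)
  have R: "\<forall>n<s. r n \<in> mpow (Suc v)"
  proof (intro allI impI)
    fix n assume n: "n < s"
    then have "skew_mult \<sigma> \<delta> g f n \<in> mpow (Suc v)" using B[of n] by simp
    moreover have "r n = - skew_mult \<sigma> \<delta> g f n" using eq[of n] n by (simp add: eq_neg_iff_add_eq_0 add.commute)
    ultimately show "r n \<in> mpow (Suc v)" using mpow_neg by simp
  qed
  have "g i \<in> mpow (Suc v)" for i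
  proof (induction i rule: less_induct)
    case (less i)
    let ?S = "\<Sum>l<i. g l * C l i"
    have S: "?S \<in> mpow (Suc v)" using less by (auto intro!: mpow_sum mpow_rmult)
    have z: "skew_mult \<sigma> \<delta> g f (i + s) = 0" using eq[of "i + s"] by simp
    have "- (g i * u i + ?S) \<in> mpow (Suc v)" using B[of "i + s"] reidx[of g i] z by simp
    from mpow_neg[OF this] have "g i * u i + ?S \<in> mpow (Suc v)" by (simp add: add.commute)
    then have "(g i * u i + ?S) - ?S \<in> mpow (Suc v)" using S mpow_diff by blast
    then have "g i * u i \<in> mpow (Suc v)" by simp
    moreover have "two_sided_unit (u i)" unfolding u_def by (rule sp_unit[OF fs_unit])
    ultimately show ?case using unit_cancel by blast
  qed
  then show ?case using R by blast
qed

end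


context ws2 begin

lemma exist: "\<exists>g r. h = (\<lambda>n. skew_mult \<sigma> \<delta> g f n + (if n < s then r n else 0))"
proof -
  define P where "P e g' r' \<longleftrightarrow> (\<forall>v. (\<forall>n. e n \<in> mpow v) \<longrightarrow> (\<forall>i. g' i \<in> mpow v) \<and> (\<forall>n. r' n \<in> mpow v) \<and>
   (\<forall>n. e n - skew_mult \<sigma> \<delta> g' f n - (if n < s then r' n else 0) \<in> mpow (Suc v)))"
    for e g' r' :: "nat \<Rightarrow> 'a"
  have "\<forall>e. \<exists>p. P e (fst p) (snd p)"
  proof
    fix e :: "nat \<Rightarrow> 'a"
    obtain g' r' where "P e g' r'" using step_ex[of e] unfolding P_def by blast
    then show "\<exists>p. P e (fst p) (snd p)" by (intro exI[of _ "(g', r')"]) simp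
  qed
  from choice[OF this] obtain F where F: "\<And>e. P e (fst (F e)) (snd (F e))" by blast
  define res where "res G R n = h n - skew_mult \<sigma> \<delta> G f n - (if n < s then R n else 0)"
    for G R :: "nat \<Rightarrow> 'a" and n
  define it where "it = rec_nat ((\<lambda>_. 0, \<lambda>_. 0) :: (nat \<Rightarrow> 'a) \<times> (nat \<Rightarrow> 'a))
     (\<lambda>v p. (\<lambda>i. fst p i + fst (F (res (fst p) (snd p))) i, \<lambda>i. snd p i + snd (F (res (fst p) (snd p))) i))"
  define dg where "dg v = fst (F (res (fst (it v)) (snd (it v))))" for v
  define dr where "dr v = snd (F (res (fst (it v)) (snd (it v))))" for v
  have it0: "it 0 = (\<lambda>_. 0, \<lambda>_. 0)" unfolding it_def by simp
  have itS: "it (Suc v) = (\<lambda>i. fst (it v) i + dg v i, \<lambda>i. snd (it v) i + dr v i)" for v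
    unfolding dg_def dr_def by (simp add: it_def)
  have resm: "\<forall>n. res (fst (it v)) (snd (it v)) n \<in> mpow v" for v
  proof (induction v)
    case 0 then show ?case by simp
  next
    case (Suc v)
    let ?e = "res (fst (it v)) (snd (it v))"
    have Pv: "P ?e (dg v) (dr v)" unfolding dg_def dr_def by (rule F)
    have key: "\<forall>n. ?e n - skew_mult \<sigma> \<delta> (dg v) f n - (if n < s then dr v n else 0) \<in> mpow (Suc v)"
      using Pv Suc unfolding P_def by blast
    show ?case
    proof
      fix n
      have "res (fst (it (Suc v))) (snd (it (Suc v))) n = ?e n - skew_mult \<sigma> \<delta> (dg v) f n - (if n < s then dr v n else 0)"
        unfolding itS res_def by (simp add: skew_add algebra_simps)
      then show "res (fst (it (Suc v))) (snd (it (Suc v))) n \<in> mpow (Suc v)" using key by simp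
    qed
  qed
  have dgm: "dg v i \<in> mpow v" and drm: "dr v n \<in> mpow v" for v i n
  proof -
    have "P (res (fst (it v)) (snd (it v))) (dg v) (dr v)" unfolding dg_def dr_def by (rule F)
    then show "dg v i \<in> mpow v" "dr v n \<in> mpow v" using resm[of v] unfolding P_def by blast+
  qed
  have fit: "fst (it V) i = (\<Sum>v<V. dg v i)" and sit: "snd (it V) i = (\<Sum>v<V. dr v i)" for V i
    by (induction V) (simp_all add: it0 itS)
  define G where "G i = msum (\<lambda>v. dg v i)" for i
  define R where "R i = msum (\<lambda>v. dr v i)" for i
  have t1: "tends0 (\<lambda>v. dg v i)" for i
    unfolding tends0_def using dgm mpow_anti by blast
  have t2: "tends0 (\<lambda>v. dr v i)" for i
    unfolding tends0_def using drm mpow_anti by blast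
  have GV: "G i - fst (it V) i \<in> mpow V" for i V
    unfolding G_def fit using dgm mpow_anti by (intro msum_tail[OF t1]) blast
  have RV: "R i - snd (it V) i \<in> mpow V" for i V
    unfolding R_def sit using drm mpow_anti by (intro msum_tail[OF t2]) blast
  have "res G R n \<in> mpow V" for n V
  proof -
    define D where "D i = G i - fst (it V) i" for i
    have GD: "G = (\<lambda>i. fst (it V) i + D i)" unfolding D_def by simp
    have sk: "skew_mult \<sigma> \<delta> G f n = skew_mult \<sigma> \<delta> (fst (it V)) f n + skew_mult \<sigma> \<delta> D f n"
      by (subst GD) (rule skew_add)
    have e: "res G R n = res (fst (it V)) (snd (it V)) n - skew_mult \<sigma> \<delta> D f n
       - (if n < s then R n - snd (it V) n else 0)"
      unfolding res_def sk by (simp add: algebra_simps)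
    have a: "skew_mult \<sigma> \<delta> D f n \<in> mpow V" unfolding D_def using GV by (intro skew_mpow) auto
    have b: "(if n < s then R n - snd (it V) n else 0) \<in> mpow V" using RV by simp
    show ?thesis unfolding e using resm a b by (intro mpow_diff) auto
  qed
  then have "res G R n = 0" for n using sep_zero[OF SEP] by blast
  then have "h = (\<lambda>n. skew_mult \<sigma> \<delta> G f n + (if n < s then R n else 0))"
    unfolding res_def by (auto simp: algebra_simps eq_iff_diff_eq_0[symmetric])
  then show ?thesis by blast
qed

end

theorem mainTheorem5:
  fixes \<sigma> \<delta> :: "'a::ring_1 \<Rightarrow> 'a" and f :: "nat \<Rightarrow> 'a"
  assumes "local_ring TYPE('a)"
    and "madic_separated TYPE('a)"
    and "madic_complete TYPE('a)"
    and "ring_automorphism \<sigma>"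
    and "\<sigma> ` maxideal = maxideal"
    and "sigma_derivation \<sigma> \<delta>"
    and "range \<delta> \<subseteq> maxideal"
    and "\<delta> ` maxideal \<subseteq> mpow 2"
    and "\<exists>i. two_sided_unit (f i)"
  shows "(\<forall>h :: nat \<Rightarrow> 'a. \<exists>g r. h = (\<lambda>n. skew_mult \<sigma> \<delta> g f n + (if n < ord_red f then r n else 0)))
       \<and> (\<forall>g r. (\<lambda>n. skew_mult \<sigma> \<delta> g f n + (if n < ord_red f then r n else 0)) = (\<lambda>n. 0)
              \<longrightarrow> skew_mult \<sigma> \<delta> g f = (\<lambda>n. 0) \<and> (\<forall>i < ord_red f. r i = 0))"
proof -
  interpret ws2 \<sigma> \<delta> f
    by (intro ws2.intro ws.intro lr.intro ws_axioms.intro ws2_axioms.intro) (rule assms)+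
  have U: "skew_mult \<sigma> \<delta> g f = (\<lambda>n. 0) \<and> (\<forall>i < ord_red f. r i = 0)"
    if eqf: "(\<lambda>n. skew_mult \<sigma> \<delta> g f n + (if n < ord_red f then r n else 0)) = (\<lambda>n. 0)" for g r
  proof -
    have eq: "\<And>n. skew_mult \<sigma> \<delta> g f n + (if n < ord_red f then r n else 0) = 0"
      using eqf by (metis (mono_tags, lifting))
    have r0: "\<forall>i < ord_red f. r i = 0"
      using uniq[OF eq] sep_zero[OF SEP] by blast
    have "skew_mult \<sigma> \<delta> g f n = 0" for n
      using eq[of n] r0 by (cases "n < ord_red f") auto
    then show ?thesis using r0 by auto
  qed
  show ?thesis using exist U by blast
qed


end
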